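(* Let $X,Z$ be complex Banach spaces, $E\in L(X,Z)$, $A\colon\mathrm{dom}(A)\subseteq X\to Z$ closed and densely defined, and assume $(E,A)$ has a complex resolvent index $p_{\mathrm{res}}^{(E,A)}$; set $p:=p_{\mathrm{res}}^{(E,A)}+1$. Fix $\mu\in\rho(E,A)$ and let $X_{\ker}:=\ker R_r(\mu)^p$, $Z_{\ker}:=\ker R_l(\mu)^p$. Then the operator $A_{\ker}\colon\mathrm{dom}(A_{\ker})\subseteq X_{\ker}\to Z_{\ker}$, $x\mapsto Ax$, with $\mathrm{dom}(A_{\ker}):=\mathrm{dom}(A)\cap X_{\ker}$, is well defined and has a bounded inverse $A_{\ker}^{-1}\colon Z_{\ker}\to X_{\ker}$. Furthermore, with $E_{\ker}:=E|_{X_{\ker}}\in L(X_{\ker},Z_{\ker})$, the operators $E_{\ker}A_{\ker}^{-1}\in L(Z_{\ker})$ and $A_{\ker}^{-1}E_{\ker}\in L(X_{\ker})$ are nilpotent of degree not exceeding $p$.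
   Context: $\rho(E,A)$ is the set of $\lambda\in\mathbb C$ for which $\lambda E-A\colon\mathrm{dom}(A)\to Z$ is bijective with bounded inverse. $(E,A)$ has a complex resolvent index if there is a smallest $p_{\mathrm{res}}^{(E,A)}\in\mathbb N_0$ for which there exist $\omega\in\mathbb R$, $C>0$ with $\{\operatorname{Re}\lambda>\omega\}\subseteq\rho(E,A)$ and $\|(\lambda E-A)^{-1}\|\le C|\lambda|^{p_{\mathrm{res}}^{(E,A)}-1}$ for $\operatorname{Re}\lambda>\omega$. $R_r(\lambda):=(\lambda E-A)^{-1}E\in L(X)$, $R_l(\lambda):=E(\lambda E-A)^{-1}\in L(Z)$. *)

theory Defs
  imports "HOL-Analysis.Analysis"
begin

text \<open>The distribution has no complex vector space hierarchy, so a complex Banach space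
is a real Banach space with a compatible complex scalar multiplication.\<close>

class complex_scale =
  fixes scaleC :: "complex \<Rightarrow> 'a \<Rightarrow> 'a" (infixr \<open>*\<^sub>C\<close> 75)

class complex_banach = banach + complex_scale +
  assumes scaleC_add_right: "c *\<^sub>C (x + y) = c *\<^sub>C x + c *\<^sub>C y"
    and scaleC_add_left: "(a + b) *\<^sub>C x = a *\<^sub>C x + b *\<^sub>C x"
    and scaleC_scaleC: "a *\<^sub>C (b *\<^sub>C x) = (a * b) *\<^sub>C x"
    and scaleC_one: "1 *\<^sub>C x = x"
    and scaleR_scaleC: "scaleR r x = complex_of_real r *\<^sub>C x"
    and norm_scaleC: "norm (c *\<^sub>C x) = cmod c * norm x"

definition bounded_clinear :: "('x::complex_banach \<Rightarrow> 'z::complex_banach) \<Rightarrow> bool" where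
  "bounded_clinear f \<longleftrightarrow> bounded_linear f \<and> (\<forall>c x. f (c *\<^sub>C x) = c *\<^sub>C f x)"

definition csubspace :: "'x::complex_banach set \<Rightarrow> bool" where
  "csubspace S \<longleftrightarrow> 0 \<in> S \<and> (\<forall>x\<in>S. \<forall>y\<in>S. x + y \<in> S) \<and> (\<forall>c. \<forall>x\<in>S. c *\<^sub>C x \<in> S)"

definition closed_operator :: "'x::complex_banach set \<Rightarrow> ('x \<Rightarrow> 'z::complex_banach) \<Rightarrow> bool" where
  "closed_operator D A \<longleftrightarrow> csubspace D
     \<and> (\<forall>x\<in>D. \<forall>y\<in>D. A (x + y) = A x + A y)
     \<and> (\<forall>c. \<forall>x\<in>D. A (c *\<^sub>C x) = c *\<^sub>C A x)
     \<and> closed ((\<lambda>x. (x, A x)) ` D)"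

definition densely_defined :: "'x::complex_banach set \<Rightarrow> bool" where
  "densely_defined D \<longleftrightarrow> closure D = UNIV"

definition pencil :: "('x::complex_banach \<Rightarrow> 'z::complex_banach) \<Rightarrow> ('x \<Rightarrow> 'z) \<Rightarrow> complex \<Rightarrow> 'x \<Rightarrow> 'z" where
  "pencil E A l x = l *\<^sub>C E x - A x"

definition resolvent :: "('x::complex_banach \<Rightarrow> 'z::complex_banach) \<Rightarrow> ('x \<Rightarrow> 'z) \<Rightarrow> 'x set \<Rightarrow> complex \<Rightarrow> 'z \<Rightarrow> 'x" where
  "resolvent E A D l = the_inv_into D (pencil E A l)"

definition res_set :: "('x::complex_banach \<Rightarrow> 'z::complex_banach) \<Rightarrow> ('x \<Rightarrow> 'z) \<Rightarrow> 'x set \<Rightarrow> complex set" where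
  "res_set E A D = {l. bij_betw (pencil E A l) D UNIV
       \<and> (\<exists>K. \<forall>z. norm (resolvent E A D l z) \<le> K * norm z)}"

definition res_growth :: "('x::complex_banach \<Rightarrow> 'z::complex_banach) \<Rightarrow> ('x \<Rightarrow> 'z) \<Rightarrow> 'x set \<Rightarrow> nat \<Rightarrow> bool" where
  "res_growth E A D p \<longleftrightarrow> (\<exists>\<omega>::real. \<exists>C::real. C > 0
      \<and> {l. Re l > \<omega>} \<subseteq> res_set E A D
      \<and> (\<forall>l. Re l > \<omega> \<longrightarrow>
           (\<forall>z. norm (resolvent E A D l z) \<le> C * (cmod l powi (int p - 1)) * norm z)))"

definition has_complex_resolvent_index :: "('x::complex_banach \<Rightarrow> 'z::complex_banach) \<Rightarrow> ('x \<Rightarrow> 'z) \<Rightarrow> 'x set \<Rightarrow> bool" where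
  "has_complex_resolvent_index E A D \<longleftrightarrow> (\<exists>p. res_growth E A D p)"

definition complex_resolvent_index :: "('x::complex_banach \<Rightarrow> 'z::complex_banach) \<Rightarrow> ('x \<Rightarrow> 'z) \<Rightarrow> 'x set \<Rightarrow> nat" where
  "complex_resolvent_index E A D = (LEAST p. res_growth E A D p)"

definition R_r :: "('x::complex_banach \<Rightarrow> 'z::complex_banach) \<Rightarrow> ('x \<Rightarrow> 'z) \<Rightarrow> 'x set \<Rightarrow> complex \<Rightarrow> 'x \<Rightarrow> 'x" where
  "R_r E A D l = resolvent E A D l \<circ> E"

definition R_l :: "('x::complex_banach \<Rightarrow> 'z::complex_banach) \<Rightarrow> ('x \<Rightarrow> 'z) \<Rightarrow> 'x set \<Rightarrow> complex \<Rightarrow> 'z \<Rightarrow> 'z" where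
  "R_l E A D l = E \<circ> resolvent E A D l"

end

theory Submission
  imports Defs "HOL-Real_Asymp.Real_Asymp"
begin

lemma scaleC_zero_left[simp]: "(0::complex) *\<^sub>C x = (0::'a::complex_banach)"
  using scaleR_scaleC[of 0 x] by simp

lemma scaleC_zero_right[simp]: "c *\<^sub>C (0::'a::complex_banach) = 0"
  using scaleC_add_right[of c "0::'a" 0] by simp

lemma scaleC_minus_left: "(-c) *\<^sub>C (x::'a::complex_banach) = - (c *\<^sub>C x)"
proof -
  have "c *\<^sub>C x + (-c) *\<^sub>C x = 0" using scaleC_add_left[of c "-c" x] by simp
  then show ?thesis by (simp add: eq_neg_iff_add_eq_0 add.commute)
qed

lemma scaleC_minus_right: "c *\<^sub>C (- (x::'a::complex_banach)) = - (c *\<^sub>C x)"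
proof -
  have "c *\<^sub>C x + c *\<^sub>C (-x) = 0" using scaleC_add_right[of c x "-x"] by simp
  then show ?thesis by (simp add: eq_neg_iff_add_eq_0 add.commute)
qed

lemma scaleC_diff_left: "(a - b) *\<^sub>C (x::'a::complex_banach) = a *\<^sub>C x - b *\<^sub>C x"
  using scaleC_add_left[of a "-b" x] scaleC_minus_left[of b x] by simp

lemma scaleC_diff_right: "c *\<^sub>C ((x::'a::complex_banach) - y) = c *\<^sub>C x - c *\<^sub>C y"
  using scaleC_add_right[of c x "-y"] scaleC_minus_right[of c y] by simp

lemma scaleC_sum_right: "c *\<^sub>C (\<Sum>i\<in>I. f i) = (\<Sum>i\<in>I. c *\<^sub>C (f i::'a::complex_banach))"
  by (induction I rule: infinite_finite_induct) (simp_all add: scaleC_add_right)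

lemma scaleC_sum_left: "(\<Sum>i\<in>I. f i) *\<^sub>C (x::'a::complex_banach) = (\<Sum>i\<in>I. f i *\<^sub>C x)"
  by (induction I rule: infinite_finite_induct) (simp_all add: scaleC_add_left)

lemma scaleC_eq_0_iff: "c *\<^sub>C (x::'a::complex_banach) = 0 \<longleftrightarrow> c = 0 \<or> x = 0"
  using norm_scaleC[of c x] by (metis norm_eq_zero mult_eq_0_iff norm_eq_zero zero_less_norm_iff scaleC_zero_left scaleC_zero_right)

definition clin :: "('a::complex_banach \<Rightarrow> 'b::complex_banach) \<Rightarrow> bool" where
  "clin L \<longleftrightarrow> (\<forall>x y. L (x + y) = L x + L y) \<and> (\<forall>c x. L (c *\<^sub>C x) = c *\<^sub>C L x)"

lemma clin_add: "clin L \<Longrightarrow> L (x + y) = L x + L y" unfolding clin_def by blast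
lemma clin_scale: "clin L \<Longrightarrow> L (c *\<^sub>C x) = c *\<^sub>C L x" unfolding clin_def by blast
lemma clin_zero: "clin L \<Longrightarrow> L 0 = 0"
  using clin_add[of L 0 0] by simp
lemma clin_neg: "clin L \<Longrightarrow> L (- x) = - L x"
  using clin_add[of L x "-x"] clin_zero[of L] by (simp add: eq_neg_iff_add_eq_0 add.commute)
lemma clin_diff: "clin L \<Longrightarrow> L (x - y) = L x - L y"
  using clin_add[of L x "-y"] clin_neg[of L y] by simp
lemma clin_sum: "clin L \<Longrightarrow> L (\<Sum>i\<in>I. f i) = (\<Sum>i\<in>I. L (f i))"
  by (induction I rule: infinite_finite_induct) (simp_all add: clin_add clin_zero)
lemma clin_comp: "clin L \<Longrightarrow> clin M \<Longrightarrow> clin (L \<circ> M)"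
  unfolding clin_def by simp
lemma clin_id: "clin (\<lambda>x. x)" unfolding clin_def by simp
lemma clin_funpow: fixes L :: "'a::complex_banach \<Rightarrow> 'a" shows "clin L \<Longrightarrow> clin (L ^^ n)"
proof (induction n)
  case 0 then show ?case unfolding clin_def by simp
next
  case (Suc n) then show ?case using clin_comp[of L "L ^^ n"] by (simp del: funpow.simps add: funpow.simps(2)[symmetric])
qed
lemma clin_funpow_zero: fixes L :: "'a::complex_banach \<Rightarrow> 'a" shows "clin L \<Longrightarrow> (L ^^ n) 0 = 0"
  using clin_funpow clin_zero by blast

lemma bclin_clin: "bounded_clinear E \<Longrightarrow> clin E"
  unfolding bounded_clinear_def clin_def
  by (simp add: linear_add bounded_linear.linear)


locale pctx =
  fixes E :: "'x::complex_banach \<Rightarrow> 'z::complex_banach" and A :: "'x \<Rightarrow> 'z" and D :: "'x set"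
  assumes E: "bounded_clinear E" and A: "closed_operator D A"
begin

lemma Ecl: "clin E" using E bclin_clin by blast

lemma D0: "0 \<in> D" and Dadd: "x \<in> D \<Longrightarrow> y \<in> D \<Longrightarrow> x + y \<in> D"
  and Dscale: "x \<in> D \<Longrightarrow> c *\<^sub>C x \<in> D"
  using A unfolding closed_operator_def csubspace_def by blast+

lemma Dneg: "x \<in> D \<Longrightarrow> - x \<in> D"
  using Dscale[of x "-1"] scaleC_minus_left[of 1 x] by (simp add: scaleC_one)

lemma Ddiff: "x \<in> D \<Longrightarrow> y \<in> D \<Longrightarrow> x - y \<in> D"
  using Dadd Dneg by (metis diff_conv_add_uminus)

lemma Dsum: "(\<And>i. i \<in> I \<Longrightarrow> f i \<in> D) \<Longrightarrow> (\<Sum>i\<in>I. f i) \<in> D"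
  by (induction I rule: infinite_finite_induct) (simp_all add: D0 Dadd)

lemma Aadd: "x \<in> D \<Longrightarrow> y \<in> D \<Longrightarrow> A (x + y) = A x + A y"
  and Ascale: "x \<in> D \<Longrightarrow> A (c *\<^sub>C x) = c *\<^sub>C A x"
  using A unfolding closed_operator_def by blast+

lemma A0: "A 0 = 0" using Aadd[OF D0 D0] by simp

lemma Aneg: "x \<in> D \<Longrightarrow> A (- x) = - A x"
  using Aadd[of x "-x"] Dneg A0 by (simp add: eq_neg_iff_add_eq_0 add.commute)

lemma Adiff: "x \<in> D \<Longrightarrow> y \<in> D \<Longrightarrow> A (x - y) = A x - A y"
  using Aadd[of x "-y"] Aneg[of y] Dneg by simp

lemma pencil_add: "x \<in> D \<Longrightarrow> y \<in> D \<Longrightarrow> pencil E A l (x + y) = pencil E A l x + pencil E A l y"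
  unfolding pencil_def using Aadd clin_add[OF Ecl] scaleC_add_right by (simp add: algebra_simps)

lemma pencil_scale: "x \<in> D \<Longrightarrow> pencil E A l (c *\<^sub>C x) = c *\<^sub>C pencil E A l x"
  unfolding pencil_def using Ascale clin_scale[OF Ecl] 
  by (simp add: scaleC_diff_right scaleC_scaleC mult.commute)

context
  fixes l assumes l: "l \<in> res_set E A D"
begin

lemma bij: "bij_betw (pencil E A l) D UNIV" using l unfolding res_set_def by blast

lemma inj: "inj_on (pencil E A l) D" using bij bij_betw_def by blast

lemma res_in: "resolvent E A D l z \<in> D"
  unfolding resolvent_def using bij by (metis bij_betw_def the_inv_into_into UNIV_I order_refl)

lemma res_right: "pencil E A l (resolvent E A D l z) = z"
  unfolding resolvent_def using bij by (metis bij_betw_def f_the_inv_into_f UNIV_I)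

lemma res_left: "x \<in> D \<Longrightarrow> resolvent E A D l (pencil E A l x) = x"
  unfolding resolvent_def using inj by (simp add: the_inv_into_f_f)

lemma res_clin: "clin (resolvent E A D l)"
  unfolding clin_def
proof (intro conjI allI)
  fix x y
  have "pencil E A l (resolvent E A D l x + resolvent E A D l y) = x + y"
    using pencil_add res_in res_right by simp
  then show "resolvent E A D l (x + y) = resolvent E A D l x + resolvent E A D l y"
    using res_left[of "resolvent E A D l x + resolvent E A D l y"] res_in Dadd by metis
next
  fix c x
  have "pencil E A l (c *\<^sub>C resolvent E A D l x) = c *\<^sub>C x"
    using pencil_scale res_in res_right by simp
  then show "resolvent E A D l (c *\<^sub>C x) = c *\<^sub>C resolvent E A D l x"
    using res_left[of "c *\<^sub>C resolvent E A D l x"] res_in Dscale by metis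
qed

lemma res_bound: "\<exists>K\<ge>0. \<forall>z. norm (resolvent E A D l z) \<le> K * norm z"
proof -
  obtain K where K: "\<forall>z. norm (resolvent E A D l z) \<le> K * norm z" using l unfolding res_set_def by blast
  have "\<forall>z. norm (resolvent E A D l z) \<le> max K 0 * norm z"
    using K by (metis max.cobounded1 mult_right_mono norm_ge_zero order_trans)
  then show ?thesis by (intro exI[of _ "max K 0"]) simp
qed

lemma res_RA: "x \<in> D \<Longrightarrow> resolvent E A D l (A x) = l *\<^sub>C resolvent E A D l (E x) - x"
proof -
  assume x: "x \<in> D"
  have "resolvent E A D l (l *\<^sub>C E x - A x) = x" using res_left[OF x] unfolding pencil_def .
  then show ?thesis using clin_diff[OF res_clin] clin_scale[OF res_clin] by (simp add: algebra_simps)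
qed

lemma res_AR: "A (resolvent E A D l w) = l *\<^sub>C E (resolvent E A D l w) - w"
  using res_right[of w] unfolding pencil_def by (simp add: algebra_simps)

lemma res_inj0: "resolvent E A D l w = 0 \<Longrightarrow> w = 0"
  using res_right[of w] unfolding pencil_def by (simp add: A0 clin_zero[OF Ecl])

end

end


lemma tendsto_scaleC_const:
  assumes "(c \<longlongrightarrow> a) F"
  shows "((\<lambda>t. c t *\<^sub>C v) \<longlongrightarrow> a *\<^sub>C (v::'a::complex_banach)) F"
proof -
  have "((\<lambda>t. c t - a) \<longlongrightarrow> 0) F" using assms by (rule LIM_zero)
  then have "((\<lambda>t. cmod (c t - a)) \<longlongrightarrow> 0) F" by (rule tendsto_norm_zero)
  then have "((\<lambda>t. cmod (c t - a) * norm v) \<longlongrightarrow> 0 * norm v) F"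
    by (intro tendsto_mult tendsto_const)
  then have "((\<lambda>t. norm (c t *\<^sub>C v - a *\<^sub>C v)) \<longlongrightarrow> 0) F"
    by (simp add: scaleC_diff_left[symmetric] norm_scaleC)
  then have "((\<lambda>t. c t *\<^sub>C v - a *\<^sub>C v) \<longlongrightarrow> 0) F" by (rule tendsto_norm_zero_cancel)
  then show ?thesis by (rule LIM_zero_cancel)
qed

lemma poly_top_zero:
  fixes v :: "nat \<Rightarrow> 'a::complex_banach" and \<mu> :: complex
  assumes bnd: "\<forall>t>Tb. norm (\<Sum>k<Suc q. (\<mu> - of_real t)^k *\<^sub>C v k) \<le> C * (t powi (int q - 1))"
  shows "v q = 0"
proof -
  define u :: "real \<Rightarrow> complex" where "u t = of_real (1/t)" for t
  define c where "c k t = (\<mu> - of_real t)^k / (of_real t)^q" for k t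
  define f where "f t = (\<Sum>k<Suc q. c k t *\<^sub>C v k)" for t
  have u0: "(u \<longlongrightarrow> 0) at_top"
  proof -
    have "((\<lambda>t::real. 1/t) \<longlongrightarrow> 0) at_top" by real_asymp
    from tendsto_of_real[OF this, where ?'a=complex] show ?thesis unfolding u_def by simp
  qed
  have climk: "(c k \<longlongrightarrow> (-1)^k * 0^(q-k)) at_top" if "k \<le> q" for k
  proof -
    have ev: "eventually (\<lambda>t. (\<mu> * u t - 1)^k * u t ^ (q - k) = c k t) at_top"
      using eventually_gt_at_top[of 0]
    proof (rule eventually_mono)
      fix t :: real assume t: "t > 0"
      have tq: "(of_real t :: complex)^q = of_real t ^ k * of_real t ^ (q - k)"
        using that by (simp add: power_add[symmetric])
      have "\<mu> * u t - 1 = (\<mu> - of_real t) / of_real t" using t unfolding u_def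
        by (simp add: field_simps)
      then have "(\<mu> * u t - 1)^k * u t ^ (q - k) = ((\<mu> - of_real t) / of_real t)^k * (1 / of_real t)^(q-k)"
        unfolding u_def by simp
      also have "\<dots> = c k t" unfolding c_def tq using t by (simp add: power_divide field_simps)
      finally show "(\<mu> * u t - 1)^k * u t ^ (q - k) = c k t" .
    qed
    have "((\<lambda>t. (\<mu> * u t - 1)^k * u t ^ (q - k)) \<longlongrightarrow> (\<mu> * 0 - 1)^k * 0 ^ (q - k)) at_top"
      by (intro tendsto_intros u0)
    then have "((\<lambda>t. (\<mu> * u t - 1)^k * u t ^ (q - k)) \<longlongrightarrow> (-1)^k * 0 ^ (q - k)) at_top" by simp
    then show ?thesis using ev by (rule Lim_transform_eventually)
  qed
  have flim: "(f \<longlongrightarrow> (\<Sum>k<Suc q. ((-1)^k * 0^(q-k)) *\<^sub>C v k)) at_top"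
    unfolding f_def by (intro tendsto_sum tendsto_scaleC_const climk) simp
  have "(\<Sum>k<Suc q. ((-1)^k * 0^(q-k)) *\<^sub>C v k) = ((-1)^q) *\<^sub>C v q"
    by (simp add: sum.lessThan_Suc zero_power)
  note flim = flim[unfolded this]
  have f0: "(f \<longlongrightarrow> 0) at_top"
  proof (rule Lim_null_comparison)
    show "((\<lambda>t. C / t) \<longlongrightarrow> 0) at_top" by real_asymp
    show "eventually (\<lambda>t. norm (f t) \<le> C / t) at_top"
      using eventually_gt_at_top[of "max Tb 0"]
    proof (rule eventually_mono)
      fix t :: real assume t: "t > max Tb 0"
      have fe: "f t = (1 / (of_real t)^q) *\<^sub>C (\<Sum>k<Suc q. (\<mu> - of_real t)^k *\<^sub>C v k)"
        unfolding f_def c_def scaleC_sum_right scaleC_scaleC by (simp add: field_simps)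
      have "norm (f t) = (1 / t^q) * norm (\<Sum>k<Suc q. (\<mu> - of_real t)^k *\<^sub>C v k)"
        unfolding fe norm_scaleC using t by (simp add: norm_divide norm_power)
      also have "\<dots> \<le> (1 / t^q) * (C * (t powi (int q - 1)))"
        using bnd t by (intro mult_left_mono) auto
      also have "t powi (int q - 1) = t^q / t" using t by (simp add: power_int_diff)
      also have "(1 / t^q) * (C * (t^q / t)) = C / t" using t by (simp add: field_simps)
      finally show "norm (f t) \<le> C / t" .
    qed
  qed
  have "((-1)^q) *\<^sub>C v q = (0::'a)" using tendsto_unique[OF _ flim f0] by simp
  then show ?thesis by (simp add: scaleC_eq_0_iff)
qed


lemma funpow_split: "i \<le> n \<Longrightarrow> (f ^^ n) x = (f ^^ i) ((f ^^ (n - i)) x)"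
  by (metis comp_apply funpow_add le_add_diff_inverse)

lemma nil_lemma:
  fixes L F :: "'a::complex_banach \<Rightarrow> 'a"
  assumes L: "clin L"
    and FQ: "\<And>y. (L^^p) y = 0 \<Longrightarrow> F y = - (\<Sum>k<p. \<mu>^k *\<^sub>C (L^^Suc k) y)"
    and z: "(L^^p) z = 0"
  shows "(F^^p) z = 0"
proof -
  have "i \<le> p \<Longrightarrow> (L^^(p-i)) ((F^^i) z) = 0" for i
  proof (induction i)
    case 0 then show ?case using z by simp
  next
    case (Suc i)
    define y where "y = (F^^i) z"
    have IH: "(L^^(p-i)) y = 0" using Suc y_def by simp
    have "(L^^p) y = (L^^i) ((L^^(p-i)) y)" using Suc.prems by (intro funpow_split) simp
    then have Lp: "(L^^p) y = 0" using IH clin_funpow_zero[OF L] by simp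
    have Fz: "(F^^Suc i) z = - (\<Sum>k<p. \<mu>^k *\<^sub>C (L^^Suc k) y)"
      using FQ[OF Lp] y_def by simp
    have each: "(L^^(p - Suc i)) ((L^^Suc k) y) = 0" for k
    proof -
      have "(L^^(p - Suc i)) ((L^^Suc k) y) = (L^^(p - Suc i + Suc k)) y"
        by (simp only: funpow_add comp_apply)
      also have "p - Suc i + Suc k = k + (p - i)" using Suc.prems by simp
      also have "(L^^(k + (p - i))) y = (L^^k) ((L^^(p-i)) y)" by (simp add: funpow_add)
      finally show ?thesis using IH clin_funpow_zero[OF L] by simp
    qed
    have cl: "clin (L^^(p - Suc i))" using clin_funpow[OF L] .
    show ?case unfolding Fz clin_neg[OF cl] clin_sum[OF cl] clin_scale[OF cl] each by simp
  qed
  from this[of p] show ?thesis by simp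
qed


locale pmu = pctx E A D for E :: "'x::complex_banach \<Rightarrow> 'z::complex_banach" and A D +
  fixes \<mu> assumes mu: "\<mu> \<in> res_set E A D"
begin

abbreviation "R \<equiv> resolvent E A D \<mu>"
definition "S = E \<circ> R"
definition "T = R \<circ> E"
lemma S_apply: "S x = E (R x)" unfolding S_def by simp
lemma T_apply: "T x = R (E x)" unfolding T_def by simp

lemma Rcl: "clin R" using res_clin[OF mu] .
lemma Scl: "clin S" using clin_comp[OF Ecl Rcl] unfolding S_def .
lemma Tcl: "clin T" using clin_comp[OF Rcl Ecl] unfolding T_def .

lemma TR: "(T^^k) (R z) = R ((S^^k) z)"
  by (induction k) (auto simp: S_apply T_apply)

lemma ET: "E ((T^^k) x) = (S^^k) (E x)"
  by (induction k) (auto simp: S_apply T_apply)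

lemma TSuc: "(T^^Suc k) x = R ((S^^k) (E x))"
  by (simp only: funpow_Suc_right comp_apply T_apply TR)

lemma growth:
  assumes g: "res_growth E A D q" and z: "(S^^Suc q) z = 0"
  shows "(S^^q) z = 0"
proof -
  obtain \<omega> C where C: "C > 0" and sub: "{l. Re l > \<omega>} \<subseteq> res_set E A D"
    and bnd: "\<forall>l. Re l > \<omega> \<longrightarrow> (\<forall>z. norm (resolvent E A D l z) \<le> C * (cmod l powi (int q - 1)) * norm z)"
    using g unfolding res_growth_def by blast
  have key: "norm (\<Sum>k<Suc q. (\<mu> - of_real t)^k *\<^sub>C R ((S^^k) z)) \<le> (C * norm z) * (t powi (int q - 1))"
    if t: "t > max \<omega> 0" for t
  proof -
    define l where "l = (of_real t :: complex)"
    have l: "l \<in> res_set E A D" using sub t unfolding l_def by auto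
    let ?Rl = "resolvent E A D l"
    have ident: "?Rl w = R w + (\<mu> - l) *\<^sub>C ?Rl (S w)" for w
    proof -
      define y where "y = R w"
      have yD: "y \<in> D" unfolding y_def using res_in[OF mu] .
      have "A y = \<mu> *\<^sub>C E y - w" unfolding y_def using res_AR[OF mu] .
      then have "pencil E A l y = w + (l - \<mu>) *\<^sub>C E y"
        unfolding pencil_def by (simp add: scaleC_diff_left algebra_simps)
      then have "y = ?Rl (w + (l - \<mu>) *\<^sub>C E y)" using res_left[OF l yD] by simp
      also have "\<dots> = ?Rl w + (l - \<mu>) *\<^sub>C ?Rl (S w)"
        using clin_add[OF res_clin[OF l]] clin_scale[OF res_clin[OF l]] y_def by (simp add: S_apply)
      finally have "?Rl w = y - (l - \<mu>) *\<^sub>C ?Rl (S w)" by (simp add: algebra_simps)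
      then show ?thesis unfolding y_def
        by (metis minus_diff_eq scaleC_minus_left diff_conv_add_uminus)
    qed
    have iter: "?Rl z = (\<Sum>k<n. (\<mu> - l)^k *\<^sub>C R ((S^^k) z)) + (\<mu> - l)^n *\<^sub>C ?Rl ((S^^n) z)" for n
    proof (induction n)
      case 0 then show ?case by (simp add: scaleC_one)
    next
      case (Suc n)
      have "?Rl ((S^^n) z) = R ((S^^n) z) + (\<mu> - l) *\<^sub>C ?Rl ((S^^Suc n) z)"
        using ident[of "(S^^n) z"] by simp
      then have "(\<mu> - l)^n *\<^sub>C ?Rl ((S^^n) z) = (\<mu> - l)^n *\<^sub>C R ((S^^n) z) + (\<mu> - l)^Suc n *\<^sub>C ?Rl ((S^^Suc n) z)"
        by (simp add: scaleC_add_right scaleC_scaleC mult.commute)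
      then show ?case using Suc.IH by (simp add: add.assoc)
    qed
    have "?Rl z = (\<Sum>k<Suc q. (\<mu> - l)^k *\<^sub>C R ((S^^k) z))"
      using iter[of "Suc q"] z clin_zero[OF res_clin[OF l]] by simp
    moreover have "Re l > \<omega>" using t unfolding l_def by simp
    then have "norm (?Rl z) \<le> C * (cmod l powi (int q - 1)) * norm z"
      using bnd by blast
    moreover have "cmod l = t" using t unfolding l_def by simp
    ultimately show ?thesis unfolding l_def by (simp add: algebra_simps)
  qed
  have "R ((S^^q) z) = 0"
    by (rule poly_top_zero[where Tb = "max \<omega> 0" and \<mu> = \<mu> and C = "C * norm z"]) (use key in auto)
  then show ?thesis using res_inj0[OF mu] by blast
qed

lemma inj_pt:
  assumes w: "w \<in> D" "A w = 0" "(T^^p) w = 0" shows "w = 0"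
proof -
  have w1: "w = \<mu> *\<^sub>C T w"
    using res_RA[OF mu w(1)] w(2) clin_zero[OF Rcl] by (simp add: eq_diff_eq T_apply)
  have "w = \<mu>^k *\<^sub>C (T^^k) w" for k
  proof (induction k)
    case 0 then show ?case by (simp add: scaleC_one)
  next
    case (Suc k)
    have "\<mu>^Suc k *\<^sub>C (T^^Suc k) w = \<mu>^k *\<^sub>C (T^^k) (\<mu> *\<^sub>C T w)"
      by (simp only: funpow_Suc_right comp_apply clin_scale[OF clin_funpow[OF Tcl]] scaleC_scaleC)
         (simp only: mult.commute power_Suc)
    then show ?case using Suc.IH w1 by metis
  qed
  from this[of p] w(3) show ?thesis by simp
qed

definition "Q p z = - (\<Sum>k<p. \<mu>^k *\<^sub>C R ((S^^k) z))"

lemma surj_pt: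
  assumes z: "(S^^p) z = 0"
  shows "Q p z \<in> D" "(T^^p) (Q p z) = 0" "A (Q p z) = z"
proof -
  define w where "w = - (\<Sum>k<p. \<mu>^k *\<^sub>C (S^^k) z)"
  have Qw: "Q p z = R w" unfolding Q_def w_def
    by (simp add: clin_neg[OF Rcl] clin_sum[OF Rcl] clin_scale[OF Rcl])
  show "Q p z \<in> D" unfolding Qw using res_in[OF mu] .
  have "(S^^p) ((S^^k) z) = 0" for k
    by (metis comp_apply funpow_add add.commute z clin_funpow_zero[OF Scl])
  then have "(S^^p) w = 0" unfolding w_def
    by (simp add: clin_neg[OF clin_funpow[OF Scl]] clin_sum[OF clin_funpow[OF Scl]] clin_scale[OF clin_funpow[OF Scl]])
  then show "(T^^p) (Q p z) = 0" unfolding Qw TR using clin_zero[OF Rcl] by simp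
  define g where "g k = \<mu>^k *\<^sub>C (S^^k) z" for k
  have "S w = - (\<Sum>k<p. \<mu>^k *\<^sub>C (S^^Suc k) z)" unfolding w_def
    by (simp only: clin_neg[OF Scl] clin_sum[OF Scl] clin_scale[OF Scl] funpow.simps(2) comp_apply)
  then have Sw: "\<mu> *\<^sub>C S w = - (\<Sum>k<p. g (Suc k))"
    by (simp add: g_def scaleC_minus_right scaleC_sum_right scaleC_scaleC del: funpow.simps)
  have wg: "w = - (\<Sum>k<p. g k)" unfolding w_def g_def ..
  have "A (Q p z) = \<mu> *\<^sub>C S w - w" unfolding Qw using res_AR[OF mu] by (simp add: S_apply)
  also have "\<mu> *\<^sub>C S w - w = - (\<Sum>k<p. g (Suc k)) - w" unfolding Sw ..
  also have "\<dots> = (\<Sum>k<p. g k - g (Suc k))" unfolding wg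
    by (simp add: sum_subtractf)
  also have "\<dots> = g 0 - g p" by (rule sum_lessThan_telescope')
  also have "\<dots> = z" unfolding g_def using z by (simp add: scaleC_one)
  finally show "A (Q p z) = z" .
qed

lemma Ax_in:
  assumes g: "res_growth E A D q" and x: "x \<in> D" "(T^^Suc q) x = 0"
  shows "(S^^Suc q) (A x) = 0"
proof -
  have SE: "(S^^Suc q) (E x) = 0" using ET[of "Suc q" x] x(2) clin_zero[OF Ecl] by simp
  have Tq: "(T^^q) (T x) = 0" using x(2) by (simp only: funpow_Suc_right comp_apply)
  have "(S^^Suc q) (A x) = (S^^q) (E (\<mu> *\<^sub>C T x - x))"
    by (simp only: funpow_Suc_right comp_apply S_apply T_apply res_RA[OF mu x(1)])
  also have "\<dots> = \<mu> *\<^sub>C E ((T^^q) (T x)) - E ((T^^q) x)"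
    by (simp add: clin_diff[OF Ecl] clin_scale[OF Ecl] clin_diff[OF clin_funpow[OF Scl]]
        clin_scale[OF clin_funpow[OF Scl]] ET del: funpow.simps o_apply)
  also have "\<dots> = 0" using Tq growth[OF g SE] ET[of q x] clin_zero[OF Ecl] by simp
  finally show ?thesis .
qed

lemma Q_bound: "\<exists>K. \<forall>z. norm (Q p z) \<le> K * norm z"
proof -
  obtain KR where KR: "KR \<ge> 0" "\<forall>z. norm (R z) \<le> KR * norm z" using res_bound[OF mu] by blast
  obtain KE where KE: "KE > 0" "\<forall>x. norm (E x) \<le> norm x * KE"
    using E unfolding bounded_clinear_def using bounded_linear.pos_bounded by blast
  define M where "M = KE * KR"
  have M0: "M \<ge> 0" unfolding M_def using KR KE by simp
  have Sk: "norm ((S^^k) z) \<le> M^k * norm z" for k z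
  proof (induction k)
    case 0 then show ?case by simp
  next
    case (Suc k)
    have "norm ((S^^Suc k) z) = norm (E (R ((S^^k) z)))" by (simp add: S_apply)
    also have "\<dots> \<le> norm (R ((S^^k) z)) * KE" using KE by blast
    also have "\<dots> \<le> KR * norm ((S^^k) z) * KE" using KR KE by (simp add: mult_right_mono)
    also have "\<dots> \<le> KR * (M^k * norm z) * KE"
      using Suc KR KE by (intro mult_right_mono mult_left_mono) auto
    also have "\<dots> = M^Suc k * norm z" unfolding M_def by (simp add: algebra_simps)
    finally show ?case .
  qed
  have "norm (Q p z) \<le> (\<Sum>k<p. cmod \<mu>^k * KR * M^k) * norm z" for z
  proof -
    have "norm (Q p z) \<le> (\<Sum>k<p. norm (\<mu>^k *\<^sub>C R ((S^^k) z)))"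
      unfolding Q_def norm_minus_cancel by (rule norm_sum)
    also have "\<dots> \<le> (\<Sum>k<p. cmod \<mu>^k * KR * M^k * norm z)"
    proof (rule sum_mono)
      fix k
      have "norm (R ((S^^k) z)) \<le> KR * (M^k * norm z)"
        using KR Sk[of k z] by (meson mult_left_mono order_trans)
      then show "norm (\<mu>^k *\<^sub>C R ((S^^k) z)) \<le> cmod \<mu>^k * KR * M^k * norm z"
        by (simp add: norm_scaleC norm_power mult_left_mono mult.assoc)
    qed
    also have "\<dots> = (\<Sum>k<p. cmod \<mu>^k * KR * M^k) * norm z" by (simp add: sum_distrib_right)
    finally show ?thesis .
  qed
  then show ?thesis by blast
qed

end


theorem lemma3p1:
  fixes E :: "'x::complex_banach \<Rightarrow> 'z::complex_banach"
    and A :: "'x \<Rightarrow> 'z"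
    and D :: "'x set"
    and \<mu> :: complex
  assumes E: "bounded_clinear E"
    and A: "closed_operator D A"
    and dense: "densely_defined D"
    and idx: "has_complex_resolvent_index E A D"
    and mu: "\<mu> \<in> res_set E A D"
  defines "p \<equiv> complex_resolvent_index E A D + 1"
  defines "Xker \<equiv> {x. (R_r E A D \<mu> ^^ p) x = 0}"
  defines "Zker \<equiv> {z. (R_l E A D \<mu> ^^ p) z = 0}"
  defines "Akinv \<equiv> the_inv_into (D \<inter> Xker) A"
  shows "(\<forall>x \<in> D \<inter> Xker. A x \<in> Zker)
    \<and> bij_betw A (D \<inter> Xker) Zker
    \<and> (\<exists>K. \<forall>z \<in> Zker. norm (Akinv z) \<le> K * norm z)
    \<and> (\<forall>x \<in> Xker. E x \<in> Zker)
    \<and> (\<forall>z \<in> Zker. ((E \<circ> Akinv) ^^ p) z = 0)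
    \<and> (\<forall>x \<in> Xker. ((Akinv \<circ> E) ^^ p) x = 0)"
proof -
  interpret pmu E A D \<mu> by unfold_locales (use E A mu in auto)
  define q where "q = complex_resolvent_index E A D"
  have g: "res_growth E A D q" unfolding q_def complex_resolvent_index_def
    using idx unfolding has_complex_resolvent_index_def by (rule LeastI_ex)
  have pq: "p = Suc q" unfolding p_def q_def by simp
  have Xk: "Xker = {x. (T^^p) x = 0}" unfolding Xker_def R_r_def T_def ..
  have Zk: "Zker = {z. (S^^p) z = 0}" unfolding Zker_def R_l_def S_def ..
  have c1: "\<forall>x \<in> D \<inter> Xker. A x \<in> Zker"
    unfolding Xk Zk pq using Ax_in[OF g] by blast
  have inj: "inj_on A (D \<inter> Xker)"
  proof (rule inj_onI)
    fix x y assume x: "x \<in> D \<inter> Xker" and y: "y \<in> D \<inter> Xker" and e: "A x = A y"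
    have "x - y \<in> D" using x y Ddiff by blast
    moreover have "A (x - y) = 0" using x y e Adiff by simp
    moreover have "(T^^p) (x - y) = 0" using x y clin_diff[OF clin_funpow[OF Tcl]] unfolding Xk by simp
    ultimately have "x - y = 0" by (rule inj_pt)
    then show "x = y" by simp
  qed
  have Qz: "Akinv z = Q p z \<and> Q p z \<in> D \<inter> Xker \<and> A (Q p z) = z" if z: "z \<in> Zker" for z
  proof -
    have zz: "(S^^p) z = 0" using z unfolding Zk by simp
    have m: "Q p z \<in> D \<inter> Xker" using surj_pt(1,2)[OF zz] unfolding Xk by simp
    have a: "A (Q p z) = z" using surj_pt(3)[OF zz] .
    have "Akinv z = Q p z" unfolding Akinv_def by (rule the_inv_into_f_eq[OF inj a m])
    then show ?thesis using m a by blast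
  qed
  have img: "A ` (D \<inter> Xker) = Zker"
  proof
    show "A ` (D \<inter> Xker) \<subseteq> Zker" using c1 by blast
    show "Zker \<subseteq> A ` (D \<inter> Xker)"
    proof
      fix z assume "z \<in> Zker"
      then have "A (Q p z) = z" "Q p z \<in> D \<inter> Xker" using Qz by blast+
      then show "z \<in> A ` (D \<inter> Xker)" by (metis image_eqI)
    qed
  qed
  have c2: "bij_betw A (D \<inter> Xker) Zker" using inj img unfolding bij_betw_def by blast
  have c3: "\<exists>K. \<forall>z \<in> Zker. norm (Akinv z) \<le> K * norm z"
  proof -
    obtain K where K: "\<forall>z. norm (Q p z) \<le> K * norm z" using Q_bound[of p] by blast
    show ?thesis using K Qz by (intro exI[of _ K]) simp
  qed
  have EZ: "E x \<in> Zker" if "x \<in> Xker" for x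
    using that ET[of p x] clin_zero[OF Ecl] unfolding Xk Zk by simp
  have c5: "\<forall>z \<in> Zker. ((E \<circ> Akinv) ^^ p) z = 0"
  proof
    fix z assume z: "z \<in> Zker"
    show "((E \<circ> Akinv) ^^ p) z = 0"
    proof (rule nil_lemma[OF Scl, where \<mu> = \<mu>])
      show "(S^^p) z = 0" using z unfolding Zk by simp
      fix y assume y: "(S^^p) y = 0"
      then have "Akinv y = Q p y" using Qz unfolding Zk by blast
      then show "(E \<circ> Akinv) y = - (\<Sum>k<p. \<mu>^k *\<^sub>C (S^^Suc k) y)"
        unfolding Q_def by (simp add: clin_neg[OF Ecl] clin_sum[OF Ecl] clin_scale[OF Ecl] S_apply)
    qed
  qed
  have c6: "\<forall>x \<in> Xker. ((Akinv \<circ> E) ^^ p) x = 0"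
  proof
    fix x assume x: "x \<in> Xker"
    show "((Akinv \<circ> E) ^^ p) x = 0"
    proof (rule nil_lemma[OF Tcl, where \<mu> = \<mu>])
      show "(T^^p) x = 0" using x unfolding Xk by simp
      fix y assume y: "(T^^p) y = 0"
      then have "Akinv (E y) = Q p (E y)" using Qz EZ unfolding Xk by blast
      then show "(Akinv \<circ> E) y = - (\<Sum>k<p. \<mu>^k *\<^sub>C (T^^Suc k) y)"
        unfolding Q_def TSuc by simp
    qed
  qed
  show ?thesis using c1 c2 c3 EZ c5 c6 by blast
qed

end
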